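(* Let $E$ be the equational theory of implicative semilattices (algebras in signature $\{\top,\wedge,\to\}$; the $\{\top,\wedge,\to\}$-fragment of intuitionistic logic) and $C=\{z\}$. The $C$-unification problem $\big((x\to z)\wedge(y\to z)\to z,\ \top\big)$ has the $C$-unifiers $\sigma=\{x\mapsto\top,\ y\mapsto y\}$ and $\tau=\{x\mapsto x,\ y\mapsto\top\}$ (both fixing $z$), which are incomparable, and there is no $C$-unifier $\mu$ such that both $\sigma$ and $\tau$ are less general than $\mu$. Consequently this problem has no $C$-mgu, and $E$ does not have unitary svr-unification type.
   Context: For a finite set $C$ of variables, a substitution $\sigma$ is $C$-invariant if $\sigma(c)=c$ for $c\in C$ and $\sigma(x)$ contains no variable of $C$ for $x\notin C$. A $C$-unifier of a problem $\{(\phi_j,\psi_j)\}$ is a $C$-invariant substitution $\sigma$ with $E\models\sigma(\phi_j)=\sigma(\psi_j)$ for all $j$. A substitution $\tau$ is less general than $\sigma$ if there is a substitution $\theta$ with $E\models\tau(v)=\theta(\sigma(v))$ for every variable $v$. A $C$-mgu is a $C$-unifier $\mu$ such that every $C$-unifier is less general than $\mu$; $E$ has unitary svr-unification type if every $C$-unification problem (for every $C$) with a $C$-unifier has a $C$-mgu. *)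

theory Defs
  imports Main
begin

datatype 'v trm = Var 'v | Top | Meet "'v trm" "'v trm" | Imp "'v trm" "'v trm"

primrec vars :: "'v trm \<Rightarrow> 'v set" where
  "vars (Var v) = {v}"
| "vars Top = {}"
| "vars (Meet s t) = vars s \<union> vars t"
| "vars (Imp s t) = vars s \<union> vars t"

type_synonym 'v subst = "'v \<Rightarrow> 'v trm"

primrec app :: "'v subst \<Rightarrow> 'v trm \<Rightarrow> 'v trm" where
  "app \<sigma> (Var v) = \<sigma> v"
| "app \<sigma> Top = Top"
| "app \<sigma> (Meet s t) = Meet (app \<sigma> s) (app \<sigma> t)"
| "app \<sigma> (Imp s t) = Imp (app \<sigma> s) (app \<sigma> t)"

text \<open>Equational basis of the variety of implicative semilattices
  (meet-semilattice with top, plus the standard identities for relative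
  pseudocomplement).\<close>
inductive isl_axiom :: "'v trm \<Rightarrow> 'v trm \<Rightarrow> bool" where
  "isl_axiom (Meet x x) x"
| "isl_axiom (Meet x y) (Meet y x)"
| "isl_axiom (Meet x (Meet y z)) (Meet (Meet x y) z)"
| "isl_axiom (Meet x Top) x"
| "isl_axiom (Imp x x) Top"
| "isl_axiom (Meet x (Imp x y)) (Meet x y)"
| "isl_axiom (Meet y (Imp x y)) y"
| "isl_axiom (Imp x (Meet y z)) (Meet (Imp x y) (Imp x z))"

text \<open>E |= s = t: the equational theory E of implicative semilattices,
  i.e. the closure of the axioms under equational logic
  (reflexivity, symmetry, transitivity, congruence; axioms are schematic,
  hence closed under substitution).\<close>
inductive E_eq :: "'v trm \<Rightarrow> 'v trm \<Rightarrow> bool" where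
  ax: "isl_axiom s t \<Longrightarrow> E_eq s t"
| refl: "E_eq t t"
| sym: "E_eq s t \<Longrightarrow> E_eq t s"
| trans: "E_eq s t \<Longrightarrow> E_eq t u \<Longrightarrow> E_eq s u"
| meet: "E_eq s1 t1 \<Longrightarrow> E_eq s2 t2 \<Longrightarrow> E_eq (Meet s1 s2) (Meet t1 t2)"
| imp: "E_eq s1 t1 \<Longrightarrow> E_eq s2 t2 \<Longrightarrow> E_eq (Imp s1 s2) (Imp t1 t2)"

definition C_invariant :: "'v set \<Rightarrow> 'v subst \<Rightarrow> bool" where
  "C_invariant C \<sigma> \<longleftrightarrow> (\<forall>c\<in>C. \<sigma> c = Var c) \<and> (\<forall>x. x \<notin> C \<longrightarrow> vars (\<sigma> x) \<inter> C = {})"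

definition C_unifier :: "'v set \<Rightarrow> ('v trm \<times> 'v trm) list \<Rightarrow> 'v subst \<Rightarrow> bool" where
  "C_unifier C P \<sigma> \<longleftrightarrow> C_invariant C \<sigma> \<and> (\<forall>(s, t) \<in> set P. E_eq (app \<sigma> s) (app \<sigma> t))"

definition less_general :: "'v subst \<Rightarrow> 'v subst \<Rightarrow> bool" where
  "less_general \<tau> \<sigma> \<longleftrightarrow> (\<exists>\<theta>. \<forall>v. E_eq (\<tau> v) (app \<theta> (\<sigma> v)))"

definition C_mgu :: "'v set \<Rightarrow> ('v trm \<times> 'v trm) list \<Rightarrow> 'v subst \<Rightarrow> bool" where
  "C_mgu C P \<mu> \<longleftrightarrow> C_unifier C P \<mu> \<and> (\<forall>\<sigma>. C_unifier C P \<sigma> \<longrightarrow> less_general \<sigma> \<mu>)"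

definition unitary_svr :: "'v itself \<Rightarrow> bool" where
  "unitary_svr _ \<longleftrightarrow> (\<forall>(C :: 'v set) P. finite C \<longrightarrow> (\<exists>\<sigma>. C_unifier C P \<sigma>) \<longrightarrow> (\<exists>\<mu>. C_mgu C P \<mu>))"

end

theory Submission
  imports Defs
begin

primrec beval :: "('v \<Rightarrow> bool) \<Rightarrow> 'v trm \<Rightarrow> bool" where
  "beval f (Var v) = f v"
| "beval f Top = True"
| "beval f (Meet s t) = (beval f s \<and> beval f t)"
| "beval f (Imp s t) = (beval f s \<longrightarrow> beval f t)"

lemma beval_sound: "E_eq s t \<Longrightarrow> beval f s = beval f t"
proof (induction rule: E_eq.induct)
  case (ax s t) then show ?case by (cases rule: isl_axiom.cases) auto
qed auto

lemma beval_app: "beval f (app \<theta> t) = beval (\<lambda>v. beval f (\<theta> v)) t"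
  by (induction t) auto

definition le :: "nat \<Rightarrow> nat \<Rightarrow> bool" where
  "le w w' \<longleftrightarrow> w = w' \<or> w = 0"

primrec forces :: "('v \<Rightarrow> nat \<Rightarrow> bool) \<Rightarrow> nat \<Rightarrow> 'v trm \<Rightarrow> bool" where
  "forces V w (Var v) = V v w"
| "forces V w Top = True"
| "forces V w (Meet s t) = (forces V w s \<and> forces V w t)"
| "forces V w (Imp s t) = (\<forall>w'. le w w' \<longrightarrow> forces V w' s \<longrightarrow> forces V w' t)"

definition mono_val :: "('v \<Rightarrow> nat \<Rightarrow> bool) \<Rightarrow> bool" where
  "mono_val V \<longleftrightarrow> (\<forall>v w w'. le w w' \<longrightarrow> V v w \<longrightarrow> V v w')"

lemma le_refl: "le w w" by (simp add: le_def)
lemma le_trans: "le a b \<Longrightarrow> le b c \<Longrightarrow> le a c" by (auto simp: le_def)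

lemma persist: "mono_val V \<Longrightarrow> le w w' \<Longrightarrow> forces V w t \<Longrightarrow> forces V w' t"
proof (induction t arbitrary: w w')
  case (Var v) then show ?case by (auto simp: mono_val_def)
next
  case (Imp s t)
  have "le w w''" if "le w' w''" for w'' using le_trans[OF Imp.prems(2) that] .
  then show ?case using Imp.prems(3) by simp
qed auto

lemma forces_sound: "E_eq s t \<Longrightarrow> mono_val V \<Longrightarrow> forces V w s = forces V w t"
proof (induction arbitrary: w rule: E_eq.induct)
  case (ax s t)
  from ax(1) show ?case
  proof (cases rule: isl_axiom.cases)
    case 6 then show ?thesis using ax(2) le_refl persist[OF ax(2)] by auto
  next
    case 7 then show ?thesis using ax(2) le_refl persist[OF ax(2)] by auto
  qed (auto simp: le_refl)
next
  case (imp s1 t1 s2 t2) then show ?case by simp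
qed auto

lemma forces_top: "w \<noteq> 0 \<Longrightarrow> forces V w t = beval (\<lambda>v. V v w) t"
  by (induction t) (auto simp: le_def)

lemma forces_vars: "(\<forall>v\<in>vars t. \<forall>w. V v w = V' v w) \<Longrightarrow> forces V w t = forces V' w t"
  by (induction t arbitrary: w) auto

declare E_eq.trans[trans]

lemma imp_top: "E_eq (Imp Top z) z"
proof -
  have "E_eq (Imp Top z) (Meet (Imp Top z) Top)" by (rule E_eq.sym, rule E_eq.ax, rule isl_axiom.intros)
  also have "E_eq \<dots> (Meet Top (Imp Top z))" by (rule E_eq.ax, rule isl_axiom.intros)
  also have "E_eq \<dots> (Meet Top z)" by (rule E_eq.ax, rule isl_axiom.intros)
  also have "E_eq \<dots> (Meet z Top)" by (rule E_eq.ax, rule isl_axiom.intros)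
  also have "E_eq \<dots> z" by (rule E_eq.ax, rule isl_axiom.intros)
  finally show ?thesis .
qed

lemma E_meet_l: "E_eq a a' \<Longrightarrow> E_eq (Meet a b) (Meet a' b)"
  by (rule E_eq.meet, assumption, rule E_eq.refl)
lemma E_meet_r: "E_eq b b' \<Longrightarrow> E_eq (Meet a b) (Meet a b')"
  by (rule E_eq.meet, rule E_eq.refl, assumption)
lemma E_imp_l: "E_eq a a' \<Longrightarrow> E_eq (Imp a b) (Imp a' b)"
  by (rule E_eq.imp, assumption, rule E_eq.refl)

lemma unif1: "E_eq (Imp (Meet (Imp Top z) (Imp y z)) z) Top"
proof -
  have "E_eq (Imp (Meet (Imp Top z) (Imp y z)) z) (Imp (Meet z (Imp y z)) z)"
    by (rule E_imp_l, rule E_meet_l, rule imp_top)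
  also have "E_eq \<dots> (Imp z z)" by (rule E_imp_l, rule E_eq.ax, rule isl_axiom.intros)
  also have "E_eq \<dots> Top" by (rule E_eq.ax, rule isl_axiom.intros)
  finally show ?thesis .
qed

lemma unif2: "E_eq (Imp (Meet (Imp x z) (Imp Top z)) z) Top"
proof -
  have "E_eq (Imp (Meet (Imp x z) (Imp Top z)) z) (Imp (Meet (Imp x z) z) z)"
    by (rule E_imp_l, rule E_meet_r, rule imp_top)
  also have "E_eq \<dots> (Imp (Meet z (Imp x z)) z)" by (rule E_imp_l, rule E_eq.ax, rule isl_axiom.intros)
  also have "E_eq \<dots> (Imp z z)" by (rule E_imp_l, rule E_eq.ax, rule isl_axiom.intros)
  also have "E_eq \<dots> Top" by (rule E_eq.ax, rule isl_axiom.intros)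
  finally show ?thesis .
qed

lemma var_not_top: "\<not> E_eq (Var (v::'v)) Top"
proof
  assume "E_eq (Var v) Top"
  from beval_sound[OF this, of "\<lambda>_. False"] show False by simp
qed

lemma no_common:
  fixes x y z :: nat
  assumes "x \<noteq> y" "x \<noteq> z" "y \<noteq> z"
  and U: "C_unifier {z} [(Imp (Meet (Imp (Var x) (Var z)) (Imp (Var y) (Var z))) (Var z), Top)] \<mu>"
  and L1: "less_general (Var(x := Top)) \<mu>" and L2: "less_general (Var(y := Top)) \<mu>"
  shows False
proof -
  from L1 obtain \<theta>1 where t1: "\<And>v. E_eq ((Var(x := Top)) v) (app \<theta>1 (\<mu> v))"
    unfolding less_general_def by blast
  from L2 obtain \<theta>2 where t2: "\<And>v. E_eq ((Var(y := Top)) v) (app \<theta>2 (\<mu> v))"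
    unfolding less_general_def by blast
  define a where "a = \<mu> x"
  define b where "b = \<mu> y"
  have by1: "E_eq (Var y) (app \<theta>1 b)" using t1[of y] assms(1) by (simp add: b_def)
  have ax2: "E_eq (Var x) (app \<theta>2 a)" using t2[of x] assms(1) by (simp add: a_def)
  from U have mz: "\<mu> z = Var z" and za: "z \<notin> vars a" and zb: "z \<notin> vars b"
    and eq: "E_eq (Imp (Meet (Imp a (Var z)) (Imp b (Var z))) (Var z)) Top"
    using assms(2,3) by (auto simp: C_unifier_def C_invariant_def a_def b_def)
  define h1 where "h1 = (\<lambda>v::nat. v \<noteq> y)"
  define h2 where "h2 = (\<lambda>v::nat. v \<noteq> x)"
  define V where "V = (\<lambda>v (w::nat). if w = 1 then beval h1 (app \<theta>1 (Var v))
      else if w = 2 then beval h2 (app \<theta>2 (Var v))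
      else if w = 0 then (beval h1 (app \<theta>1 (Var v)) \<and> beval h2 (app \<theta>2 (Var v))) else True)"
  have mV: "mono_val V" unfolding mono_val_def le_def V_def by auto
  define V' where "V' = (\<lambda>v w. if v = z then forces V w a \<or> forces V w b else V v w)"
  have mV': "mono_val V'" unfolding mono_val_def
  proof (intro allI impI)
    fix v w w' assume "le w w'" "V' v w"
    then show "V' v w'" using persist[OF mV] mV unfolding V'_def mono_val_def
      by (auto split: if_splits)
  qed
  have fa: "forces V' w a = forces V w a" for w
    by (rule forces_vars) (use za in \<open>auto simp: V'_def\<close>)
  have fb: "forces V' w b = forces V w b" for w
    by (rule forces_vars) (use zb in \<open>auto simp: V'_def\<close>)
  have "forces V' 0 (Imp (Meet (Imp a (Var z)) (Imp b (Var z))) (Var z))"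
    using forces_sound[OF eq mV'] by simp
  then have "forces V' 0 (Var z)"
    using le_refl[of 0] by (simp add: fa fb) (auto simp: V'_def)
  then have "forces V 0 a \<or> forces V 0 b" by (simp add: V'_def)
  then show False
  proof
    assume "forces V 0 a"
    then have "forces V 2 a" using persist[OF mV, of 0 2 a] by (simp add: le_def)
    then have "beval (\<lambda>v. V v 2) a" using forces_top[of 2 V a] by simp
    then have "beval h2 (app \<theta>2 a)" by (simp add: V_def beval_app)
    then have "beval h2 (Var x)" using beval_sound[OF ax2] by simp
    then show False by (simp add: h2_def)
  next
    assume "forces V 0 b"
    then have "forces V 1 b" using persist[OF mV, of 0 1 b] by (simp add: le_def)
    then have "beval (\<lambda>v. V v 1) b" using forces_top[of 1 V b] by simp
    then have "beval h1 (app \<theta>1 b)" by (simp add: V_def beval_app)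
    then have "beval h1 (Var y)" using beval_sound[OF by1] by simp
    then show False by (simp add: h1_def)
  qed
qed

theorem mainTheorem12:
  fixes x y z :: nat
  assumes "x \<noteq> y" "x \<noteq> z" "y \<noteq> z"
  defines "P \<equiv> [(Imp (Meet (Imp (Var x) (Var z)) (Imp (Var y) (Var z))) (Var z), Top)]"
      and "\<sigma> \<equiv> Var(x := Top)"
      and "\<tau> \<equiv> Var(y := Top)"
  shows "C_unifier {z} P \<sigma> \<and> C_unifier {z} P \<tau>
         \<and> \<not> less_general \<sigma> \<tau> \<and> \<not> less_general \<tau> \<sigma>
         \<and> \<not> (\<exists>\<mu>. C_unifier {z} P \<mu> \<and> less_general \<sigma> \<mu> \<and> less_general \<tau> \<mu>)
         \<and> \<not> (\<exists>\<mu>. C_mgu {z} P \<mu>)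
         \<and> \<not> unitary_svr TYPE(nat)"
proof -
  have u1: "C_unifier {z} P \<sigma>"
    using assms(1-3) unif1[of "Var z" "Var y"]
    by (auto simp: C_unifier_def C_invariant_def P_def \<sigma>_def)
  have u2: "C_unifier {z} P \<tau>"
    using assms(1-3) unif2[of "Var x" "Var z"]
    by (auto simp: C_unifier_def C_invariant_def P_def \<tau>_def)
  have n1: "\<not> less_general \<sigma> \<tau>"
  proof
    assume "less_general \<sigma> \<tau>"
    then obtain \<theta> where "\<And>v. E_eq (\<sigma> v) (app \<theta> (\<tau> v))" unfolding less_general_def by blast
    from this[of y] show False using assms(1) var_not_top[of y] by (simp add: \<sigma>_def \<tau>_def)
  qed
  have n2: "\<not> less_general \<tau> \<sigma>"
  proof
    assume "less_general \<tau> \<sigma>"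
    then obtain \<theta> where "\<And>v. E_eq (\<tau> v) (app \<theta> (\<sigma> v))" unfolding less_general_def by blast
    from this[of x] show False using assms(1) var_not_top[of x] by (simp add: \<sigma>_def \<tau>_def)
  qed
  have n3: "\<not> (\<exists>\<mu>. C_unifier {z} P \<mu> \<and> less_general \<sigma> \<mu> \<and> less_general \<tau> \<mu>)"
    using no_common[OF assms(1-3)] unfolding P_def \<sigma>_def \<tau>_def by blast
  have n4: "\<not> (\<exists>\<mu>. C_mgu {z} P \<mu>)"
    using n3 u1 u2 unfolding C_mgu_def by blast
  have n5: "\<not> unitary_svr TYPE(nat)"
    unfolding unitary_svr_def using n4 u1 by blast
  show ?thesis using u1 u2 n1 n2 n3 n4 n5 by blast
qed

end
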